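(* Fix a positive integer $s$, and let $h_{s,i,j}$ and $H_i(x)=\sum_{j\ge i+1}h_{s,i,j}x^j$ be as in the context. Then for every integer $0\le i\le 2s-1$, $$H_i=\sum_{j=0}^{i}(-1)^{j+1}\binom{s}{j}x^j+(-1)^{i+1}\binom{2s}{i}\frac{x^{i+1}}{(1-x)^{s+1}}+(-1)^i(2s-i)\binom{2s}{i}\sum_{t=0}^{i}(-1)^t\binom{i}{t}\frac{1}{2s-t}\frac{1}{(1-x)^{s-t}},$$ as an identity of formal power series (equivalently of rational functions) in $x$.
   Context: For a fixed positive integer $s$, the numbers $h_{s,i,j}$ (integers $i\ge 0$, $j$) are defined recursively by: $h_{s,i,j}=0$ if $j\le i$; for $i=0$ and $j\ge 1$, $h_{s,0,j}=\binom{s+j-1}{j}\frac{s-j}{s}$; for $i>0$ and $j>i$, $h_{s,i,j}=-\frac{s-j+1}{i}h_{s,i-1,j-1}-\frac{j-i}{i}h_{s,i-1,j}$. $H_i(x)=\sum_{j\ge i+1}h_{s,i,j}x^j$. *)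

theory Defs
  imports "HOL-Computational_Algebra.Formal_Power_Series"
begin

text \<open>The numbers h(s,i,j); the index j ranges over naturals since h(s,i,j) = 0 for j \<le> i and i \<ge> 0.\<close>
fun hcoef :: "nat \<Rightarrow> nat \<Rightarrow> nat \<Rightarrow> real" where
  "hcoef s 0 j =
     (if j = 0 then 0
      else real ((s + j - 1) choose j) * (real s - real j) / real s)"
| "hcoef s (Suc i) j =
     (if j \<le> Suc i then 0
      else - ((real s - real j + 1) / real (Suc i)) * hcoef s i (j - 1)
           - ((real j - real (Suc i)) / real (Suc i)) * hcoef s i j)"

definition Hfps :: "nat \<Rightarrow> nat \<Rightarrow> real fps" where
  "Hfps s i = Abs_fps (hcoef s i)"

text \<open>The formal power series 1/(1-x)^k for an integer exponent k (here k = s - t).\<close>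
definition inv_one_minus_X_pow :: "int \<Rightarrow> real fps" where
  "inv_one_minus_X_pow k =
     (if k \<ge> 0 then inverse ((1 - fps_X) ^ nat k) else (1 - fps_X) ^ nat (- k))"

end

theory Submission
  imports Defs
begin

unbundle fps_syntax

definition G :: "nat \<Rightarrow> real fps" where
  "G k = Abs_fps (\<lambda>n. real ((k + n - 1) choose n))"

lemma G0: "G 0 = 1"
  by (auto simp: G_def fps_eq_iff)

lemma G_step: "G (Suc k) * (1 - fps_X) = G k"
proof (rule fps_ext)
  fix n
  show "(G (Suc k) * (1 - fps_X)) $ n = G k $ n"
  proof (cases n)
    case 0 then show ?thesis by (simp add: G_def algebra_simps)
  next
    case (Suc m)
    have "(G (Suc k) * (1 - fps_X)) $ n = G (Suc k) $ n - (fps_X * G (Suc k)) $ n"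
      by (simp add: algebra_simps)
    also have "\<dots> = real ((k + Suc m) choose Suc m) - real ((k + m) choose m)"
      using Suc by (simp add: G_def)
    also have "\<dots> = real ((k + m) choose Suc m)"
    proof -
      have "(k + Suc m) choose Suc m = ((k + m) choose m) + ((k + m) choose Suc m)"
        by simp
      then show ?thesis by simp
    qed
    finally show ?thesis using Suc by (simp add: G_def)
  qed
qed

lemma G_inv: "G k * (1 - fps_X) ^ k = 1"
proof (induction k)
  case 0 then show ?case by (simp add: G0)
next
  case (Suc k)
  have "G (Suc k) * (1 - fps_X) ^ Suc k = (G (Suc k) * (1 - fps_X)) * (1 - fps_X) ^ k"
    by (simp add: algebra_simps)
  then show ?case using Suc G_step by simp
qed

lemma P_pos: "k \<ge> 0 \<Longrightarrow> inv_one_minus_X_pow k = G (nat k)"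
  unfolding inv_one_minus_X_pow_def
  using fps_inverse_unique[of "(1 - fps_X) ^ nat k" "G (nat k)"] G_inv[of "nat k"]
  by (simp add: mult.commute)

lemma P_step: "(1 - fps_X) * inv_one_minus_X_pow (k + 1) = inv_one_minus_X_pow k"
proof (cases "k \<ge> 0")
  case True
  then have "nat (k+1) = Suc (nat k)" by simp
  then show ?thesis using True P_pos[of k] P_pos[of "k+1"] G_step[of "nat k"]
    by (simp add: mult.commute)
next
  case False
  then have "nat (- k) = Suc (nat (- (k+1)))" by simp
  then show ?thesis using False unfolding inv_one_minus_X_pow_def by auto
qed

lemma G_deriv: "fps_deriv (G k) = fps_const (real k) * G (Suc k)"
proof (rule fps_ext)
  fix n
  have "real (n + 1) * real ((k + (n + 1) - 1) choose (n + 1)) = real k * real ((Suc k + n - 1) choose n)"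
  proof (cases k)
    case 0 then show ?thesis by simp
  next
    case (Suc k')
    have "(Suc n) * ((k' + Suc n) choose Suc n) = Suc k' * ((Suc k' + n) choose n)"
    proof -
      have "(Suc n) * ((k' + Suc n) choose Suc n) = Suc (k' + n) * ((k' + n) choose n)"
        using Suc_times_binomial[of n "k' + n"] by simp
      also have "\<dots> = (Suc (k' + n) - n) * (Suc (k' + n) choose n)"
        using binomial_absorb_comp[of "Suc (k' + n)" n] by simp
      also have "\<dots> = Suc k' * ((Suc k' + n) choose n)"
        by (simp add: Suc_diff_le)
      finally show ?thesis .
    qed
    then have "real (Suc n) * real ((k' + Suc n) choose Suc n) = real (Suc k') * real ((Suc k' + n) choose n)"
      by (metis of_nat_mult)
    moreover have "k + (n+1) - 1 = k' + Suc n" "Suc k + n - 1 = Suc k' + n" "n + 1 = Suc n"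
      using Suc by auto
    ultimately show ?thesis using Suc by (simp only:)
  qed
  then show "fps_deriv (G k) $ n = (fps_const (real k) * G (Suc k)) $ n"
    by (simp add: G_def)
qed

lemma P_deriv: "fps_deriv (inv_one_minus_X_pow k) = fps_const (of_int k) * inv_one_minus_X_pow (k + 1)"
proof (cases "k \<ge> 0")
  case True
  then have "nat (k+1) = Suc (nat k)" by simp
  then show ?thesis using True P_pos[of k] P_pos[of "k+1"] G_deriv[of "nat k"] by simp
next
  case False
  define m where "m = nat (- k) - 1"
  have m: "nat (- k) = Suc m" "nat (- (k+1)) = m" using False by (auto simp: m_def)
  have k: "of_int k = - real (Suc m)" using m False by linarith
  have p1: "inv_one_minus_X_pow k = (1 - fps_X) ^ Suc m"
    using False m unfolding inv_one_minus_X_pow_def by simp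
  have p2: "inv_one_minus_X_pow (k + 1) = (1 - fps_X) ^ m"
  proof (cases m)
    case 0
    then have "k + 1 = 0" using m False by linarith
    then show ?thesis using 0 unfolding inv_one_minus_X_pow_def by simp
  next
    case (Suc m')
    then show ?thesis using False m unfolding inv_one_minus_X_pow_def by simp
  qed
  have d: "fps_deriv ((1 - fps_X :: real fps) ^ Suc m) = fps_const (real (Suc m)) * (- 1) * (1 - fps_X) ^ m"
    by (simp only: fps_deriv_power) simp
  show ?thesis unfolding p1 p2 d k by simp
qed


definition L :: "nat \<Rightarrow> nat \<Rightarrow> real fps \<Rightarrow> real fps" where
  "L s i F = F + fps_const (1 / real (Suc i)) *
     ((fps_X\<^sup>2 - fps_X) * fps_deriv F - fps_const (real s) * (fps_X * F))"

lemma L_add: "L s i (F + H) = L s i F + L s i H"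
  unfolding L_def by (simp add: algebra_simps)

lemma L_const: "L s i (fps_const c * F) = fps_const c * L s i F"
  unfolding L_def by (simp add: algebra_simps)

lemma L_sum: "L s i (\<Sum>x\<in>S. f x) = (\<Sum>x\<in>S. L s i (f x))"
proof (induction S rule: infinite_finite_induct)
  case (infinite A) then show ?case by (simp add: L_def)
next
  case empty then show ?case by (simp add: L_def)
next
  case (insert x F) then show ?case by (simp add: L_add)
qed

lemma X_deriv_pow: "fps_X * fps_deriv (fps_X ^ m :: real fps) = fps_const (real m) * fps_X ^ m"
proof (cases m)
  case 0 then show ?thesis by simp
next
  case (Suc m')
  show ?thesis by (rule fps_ext) (auto simp: fps_mult_left_const_nth Suc)
qed

abbreviation P :: "int \<Rightarrow> real fps" where "P \<equiv> inv_one_minus_X_pow"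

lemma L_basis0:
  "L s i (fps_X ^ m * P k) = fps_X ^ m * P k + fps_const (1 / real (Suc i)) *
     (fps_const (real m - real s - of_int k) * (fps_X ^ Suc m * P k) - fps_const (real m) * (fps_X ^ m * P k))"
proof -
  have st: "(fps_X - 1) * P (k+1) = - P k" using P_step[of k] by (simp add: algebra_simps)
  have "(fps_X\<^sup>2 - fps_X) * fps_deriv (fps_X ^ m * P k)
      = (fps_X - 1) * (fps_X * fps_deriv (fps_X ^ m)) * P k
        + fps_const (of_int k) * fps_X ^ Suc m * ((fps_X - 1) * P (k+1))"
    by (simp add: P_deriv algebra_simps power2_eq_square)
  also have "\<dots> = (fps_X - 1) * (fps_const (real m) * fps_X ^ m) * P k
        - fps_const (of_int k) * fps_X ^ Suc m * P k"
    by (simp add: X_deriv_pow st)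
  finally have e: "(fps_X\<^sup>2 - fps_X) * fps_deriv (fps_X ^ m * P k) = \<dots>" .
  have c: "fps_const (real m - real s - of_int k) = fps_const (real m) - fps_const (real s) - fps_const (of_int k)"
    by simp
  show ?thesis unfolding L_def e c power_Suc
    by (simp only: algebra_simps mult_1_left mult_1_right)
qed

lemma L_basis:
  "L s i (fps_const c * (fps_X ^ m * P k)) =
     fps_const (c * (1 - real m / real (Suc i))) * (fps_X ^ m * P k)
   + fps_const (c * (real m - real s - of_int k) / real (Suc i)) * (fps_X ^ Suc m * P k)"
proof -
  have e1: "fps_const (c * (1 - real m / real (Suc i))) = fps_const c * (1 - fps_const (1/real(Suc i)) * fps_const (real m))"
    by (simp add: fps_eq_iff fps_mult_left_const_nth field_simps)
  have e2: "fps_const (c * (real m - real s - of_int k) / real (Suc i)) = fps_const c * (fps_const (1/real(Suc i)) * fps_const (real m - real s - of_int k))"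
    by simp
  show ?thesis unfolding L_const L_basis0 e1 e2
    by (simp only: algebra_simps mult_1_left mult_1_right)
qed


lemma binom_absorb2: "real (Suc j) * real (s choose Suc j) = (real s - real j) * real (s choose j)"
proof (cases "j \<le> s")
  case True
  have "Suc j * (s choose Suc j) = (s - j) * (s choose j)"
  proof (cases s)
    case 0 then show ?thesis by simp
  next
    case (Suc s')
    have "Suc j * (Suc s' choose Suc j) = Suc s' * (s' choose j)" by (rule Suc_times_binomial)
    also have "\<dots> = (Suc s' - j) * (Suc s' choose j)"
      using binomial_absorb_comp[of "Suc s'" j] by simp
    finally show ?thesis using Suc by simp
  qed
  then have "real (Suc j * (s choose Suc j)) = real ((s - j) * (s choose j))" by simp
  then show ?thesis using True by (simp only: of_nat_mult of_nat_diff)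
next
  case False
  then show ?thesis by (simp add: binomial_eq_0)
qed

lemma hcoef_zero: "j \<le> i \<Longrightarrow> hcoef s i j = 0"
  by (cases i) auto

lemma L_nth: "L s i F $ n = F $ n + (1 / real (Suc i)) *
   ((if n = 0 then 0 else (real n - 1 - real s) * F $ (n - 1)) - real n * F $ n)"
proof -
  have a: "L s i F $ n = F $ n + (1 / real (Suc i)) *
     ((fps_X * (fps_X * fps_deriv F)) $ n - (fps_X * fps_deriv F) $ n - real s * (fps_X * F) $ n)"
  proof -
    have "(fps_X\<^sup>2 - fps_X) * fps_deriv F = fps_X * (fps_X * fps_deriv F) - fps_X * fps_deriv F"
      by (simp add: power2_eq_square algebra_simps)
    then show ?thesis
      unfolding L_def fps_add_nth fps_mult_left_const_nth fps_sub_nth by simp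
  qed
  show ?thesis
  proof (cases n)
    case 0 then show ?thesis using a by simp
  next
    case (Suc m)
    have "(fps_X * (fps_X * fps_deriv F)) $ n = real m * F $ m"
      using Suc by (cases m) auto
    moreover have "(fps_X * fps_deriv F) $ n = real n * F $ n"
      using Suc by simp
    ultimately show ?thesis using Suc a by (simp add: algebra_simps)
  qed
qed

lemma real_aux: "(r::real) > 0 \<Longrightarrow> - ((s - n + 1) / r) * a - ((n - r) / r) * b = b + (1 / r) * ((n - 1 - s) * a - n * b)"
  by (simp add: field_simps)

lemma H_rec: "Hfps s (Suc i) = L s i (Hfps s i)"
proof (rule fps_ext)
  fix n
  show "Hfps s (Suc i) $ n = L s i (Hfps s i) $ n"
  proof (cases "n \<le> Suc i")
    case True
    then show ?thesis
    proof (cases "n = Suc i")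
      case True
      then show ?thesis unfolding L_nth by (simp add: Hfps_def hcoef_zero)
    next
      case False
      then show ?thesis using True unfolding L_nth by (simp add: Hfps_def hcoef_zero)
    qed
  next
    case False
    then have "n \<noteq> 0" by simp
    have "hcoef s (Suc i) n = - ((real s - real n + 1) / real (Suc i)) * hcoef s i (n - 1)
           - ((real n - real (Suc i)) / real (Suc i)) * hcoef s i n"
      using False by simp
    also have "\<dots> = hcoef s i n + (1 / real (Suc i)) * ((real n - 1 - real s) * hcoef s i (n - 1) - real n * hcoef s i n)"
      by (rule real_aux) simp
    finally show ?thesis using \<open>n \<noteq> 0\<close> unfolding L_nth by (simp add: Hfps_def)
  qed
qed

lemma binom_id: "Suc n * ((k + n) choose Suc n) = k * ((k + n) choose n)"
proof (cases k)
  case 0 then show ?thesis by simp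
next
  case (Suc k')
  have "(Suc n) * ((k' + Suc n) choose Suc n) = Suc (k' + n) * ((k' + n) choose n)"
    using Suc_times_binomial[of n "k' + n"] by simp
  also have "\<dots> = (Suc (k' + n) - n) * (Suc (k' + n) choose n)"
    using binomial_absorb_comp[of "Suc (k' + n)" n] by simp
  also have "\<dots> = Suc k' * ((Suc k' + n) choose n)"
    by (simp add: Suc_diff_le)
  finally show ?thesis using Suc by simp
qed

lemma inv_G: "inverse ((1 - fps_X) ^ k) = G k"
  using fps_inverse_unique[of "(1 - fps_X) ^ k" "G k"] G_inv[of k]
  by (simp add: mult.commute)

lemma base:
  assumes "s > 0"
  shows "Hfps s 0 = (\<Sum>j = 0..0. fps_const ((-1) ^ (j + 1) * real (s choose j)) * fps_X ^ j)
    + fps_const ((-1) ^ (0 + 1) * real ((2 * s) choose 0)) * fps_X ^ (0 + 1)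
        * inverse ((1 - fps_X) ^ (s + 1))
    + fps_const ((-1) ^ 0 * (real (2 * s) - real 0) * real ((2 * s) choose 0))
        * (\<Sum>t = 0..0. fps_const ((-1) ^ t * real (0 choose t) / (real (2 * s) - real t))
              * inv_one_minus_X_pow (int s - int t))"
proof -
  have P: "inv_one_minus_X_pow (int s - int 0) = G s" using P_pos[of "int s"] by simp
  have c: "fps_const (real (2 * s)) * (fps_const (1 / real (2 * s)) * G s) = G s"
    using assms by simp
  have m1: "fps_const (-1::real) = -1" by (simp add: fps_eq_iff)
  have i1: "inverse ((1 - fps_X) ^ (s + 1)) = G (Suc s)" using inv_G[of "Suc s"] by simp
  have P': "inv_one_minus_X_pow (int s) = G s" using P_pos[of "int s"] by simp
  have r: "?thesis \<longleftrightarrow> Hfps s 0 = - 1 - fps_X * G (Suc s) + G s"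
    using assms by (simp only: i1) (simp add: P' mult.assoc[symmetric] m1)
  have "Hfps s 0 = - 1 - fps_X * G (Suc s) + G s"
  proof (rule fps_ext)
    fix n
    show "Hfps s 0 $ n = (- 1 - fps_X * G (Suc s) + G s) $ n"
    proof (cases n)
      case 0 then show ?thesis by (simp add: Hfps_def G_def)
    next
      case (Suc m)
      have b: "real (Suc m) * real ((s + m) choose Suc m) = real s * real ((s + m) choose m)"
        using binom_id[of m s] by (metis of_nat_mult)
      have "real (s + m choose Suc m) * (real s - real (Suc m)) / real s
            = - real (s + m choose m) + real (s + m choose Suc m)"
        using assms b by (simp add: field_simps)
      then show ?thesis using Suc by (simp add: Hfps_def G_def)
    qed
  qed
  then show ?thesis using r by simp
qed


lemma P0: "P 0 = 1" by (simp add: inv_one_minus_X_pow_def)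

lemma L_mono: "L s i (fps_const c * fps_X ^ m) = fps_const (c * (1 - real m / real (Suc i))) * fps_X ^ m
   + fps_const (c * (real m - real s) / real (Suc i)) * fps_X ^ Suc m"
  using L_basis[of s i c m 0] by (simp add: P0)

lemma L_Pk: "L s i (fps_const d * P k) = fps_const (d * (1 - (real s + of_int k) / real (Suc i))) * P k
   + fps_const (d * (real s + of_int k) / real (Suc i)) * P (k - 1)"
proof -
  define \<alpha> where "\<alpha> = d * (real s + of_int k) / real (Suc i)"
  have xp: "fps_X * P k = P k - P (k - 1)"
    using P_step[of "k - 1"] by (simp add: algebra_simps)
  have e1: "d * (1 - real 0 / real (Suc i)) = d" by simp
  have e2: "d * (real 0 - real s - of_int k) / real (Suc i) = - \<alpha>" by (simp add: \<alpha>_def field_simps)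
  have e3: "d * (1 - (real s + of_int k) / real (Suc i)) = d - \<alpha>" by (simp add: \<alpha>_def field_simps)
  have "L s i (fps_const d * P k) = fps_const d * (fps_X ^ 0 * P k) + fps_const (- \<alpha>) * (fps_X ^ Suc 0 * P k)"
  proof -
    have l0: "fps_const d * P k = fps_const d * (fps_X ^ 0 * P k)" by simp
    show ?thesis by (subst l0) (rule L_basis[of s i d 0 k, unfolded e1 e2])
  qed
  also have "\<dots> = fps_const d * P k + fps_const (- \<alpha>) * (P k - P (k - 1))"
    by (simp only: power_0 power_Suc0_right mult_1_left xp)
  also have "\<dots> = fps_const (d - \<alpha>) * P k + fps_const \<alpha> * P (k - 1)"
  proof -
    have u: "fps_const (d - \<alpha>) = fps_const d - fps_const \<alpha>" "fps_const (- \<alpha>) = - fps_const \<alpha>" by simp_all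
    have ring_aux2: "\<And>c p a q :: real fps. c * p + (- a) * (p - q) = (c - a) * p + a * q"
      by (simp add: algebra_simps)
    show ?thesis unfolding u by (rule ring_aux2)
  qed
  finally show ?thesis unfolding e3 \<alpha>_def .
qed

lemma sum_shift: "(\<Sum>j=0..i. g j) = (\<Sum>j=0..Suc i. if j = 0 then 0 else g (j - 1))"
  by (subst sum.atLeast0_atMost_Suc_shift) simp

lemma sum_ext: "f (Suc i) = 0 \<Longrightarrow> (\<Sum>j=0..i. f j) = (\<Sum>j=0..Suc i. f j)"
  by simp

lemma comb: "(x::real) + y = z \<Longrightarrow> fps_const x * Q + fps_const y * Q = fps_const z * Q"
proof -
  assume h: "x + y = z"
  have "fps_const x * Q + fps_const y * Q = (fps_const x + fps_const y) * Q" by (rule distrib_right[symmetric])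
  also have "\<dots> = fps_const z * Q" using h by simp
  finally show ?thesis .
qed

lemma A_real:
  fixes r J S c c' \<sigma> :: real
  assumes "r > 0" "(1 + J) * c' = (S - J) * c"
  shows "\<sigma> * c' * (1 - (1 + J) / r) + (- (\<sigma> * c)) * (J - S) / r = \<sigma> * c'"
proof -
  have "\<sigma> * c' * (1 - (1 + J) / r) + (- (\<sigma> * c)) * (J - S) / r
      = \<sigma> * c' - \<sigma> * ((1 + J) * c' - (S - J) * c) / r"
    using assms(1) by (simp add: field_simps)
  then show ?thesis using assms(2) by simp
qed

definition Aa :: "nat \<Rightarrow> nat \<Rightarrow> real fps" where
  "Aa s i = (\<Sum>j = 0..i. fps_const ((-1) ^ (j + 1) * real (s choose j)) * fps_X ^ j)"

lemma A_step: "L s i (Aa s i) = Aa s (Suc i)"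
proof -
  define a where "a j = (-1) ^ (j + 1) * real (s choose j)" for j
  define r where "r = real (Suc i)"
  define f where "f j = fps_const (a j * (1 - real j / r)) * fps_X ^ j" for j
  define g where "g j = fps_const (a j * (real j - real s) / r) * fps_X ^ Suc j" for j
  have "L s i (Aa s i) = (\<Sum>j=0..i. f j + g j)"
    unfolding Aa_def L_sum f_def g_def a_def r_def by (simp only: L_mono)
  also have "\<dots> = (\<Sum>j=0..i. f j) + (\<Sum>j=0..i. g j)" by (rule sum.distrib)
  also have "(\<Sum>j=0..i. f j) = (\<Sum>j=0..Suc i. f j)" by (rule sum_ext) (simp add: f_def r_def)
  also have "(\<Sum>j=0..i. g j) = (\<Sum>j=0..Suc i. if j = 0 then 0 else g (j - 1))" by (rule sum_shift)
  also have "(\<Sum>j=0..Suc i. f j) + (\<Sum>j=0..Suc i. if j = 0 then 0 else g (j - 1))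
      = (\<Sum>j=0..Suc i. f j + (if j = 0 then 0 else g (j - 1)))" by (simp add: sum.distrib)
  also have "\<dots> = (\<Sum>j=0..Suc i. fps_const (a j) * fps_X ^ j)"
  proof (rule sum.cong[OF refl])
    fix j assume "j \<in> {0..Suc i}"
    show "f j + (if j = 0 then 0 else g (j - 1)) = fps_const (a j) * fps_X ^ j"
    proof (cases j)
      case 0 then show ?thesis by (simp add: f_def)
    next
      case (Suc j')
      have b: "real (Suc j') * real (s choose Suc j') = (real s - real j') * real (s choose j')"
        by (rule binom_absorb2)
      have s1: "a (Suc j') = (-1)^j' * real (s choose Suc j')" by (simp add: a_def)
      have s2: "a j' = - ((-1)^j' * real (s choose j'))" by (simp add: a_def)
      have rp: "r > 0" by (simp add: r_def)
      have "a j * (1 - real j / r) + a j' * (real j' - real s) / r = a j"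
      proof -
        have b': "(1 + real j') * real (s choose Suc j') = (real s - real j') * real (s choose j')"
          using b by simp
        show ?thesis unfolding Suc s1 s2 using A_real[OF rp b', of "(-1)^j'"] by simp
      qed
      then have "f j + g j' = fps_const (a j) * fps_X ^ j"
        unfolding f_def g_def Suc by (rule comb)
      then show ?thesis using Suc by simp
    qed
  qed
  finally show ?thesis unfolding Aa_def a_def .
qed

definition Bb :: "nat \<Rightarrow> nat \<Rightarrow> real fps" where
  "Bb s i = fps_const ((-1) ^ (i + 1) * real ((2 * s) choose i)) * fps_X ^ (i + 1)
        * inverse ((1 - fps_X) ^ (s + 1))"

lemma invP: "inverse ((1 - fps_X) ^ (s + 1)) = P (int s + 1)"
proof -
  have "nat (int s + 1) = s + 1" by simp
  then show ?thesis unfolding inv_one_minus_X_pow_def by simp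
qed

lemma B_step: "L s i (Bb s i) = Bb s (Suc i)"
proof -
  define e where "e = (-1) ^ (i + 1) * real ((2 * s) choose i)"
  have b: "real (Suc i) * real ((2*s) choose Suc i) = (real (2*s) - real i) * real ((2*s) choose i)"
    by (rule binom_absorb2)
  have e1: "e * (1 - real (Suc i) / real (Suc i)) = 0" by simp
  have e2: "e * (real (Suc i) - real s - of_int (int s + 1)) / real (Suc i) = (-1) ^ (Suc i + 1) * real ((2 * s) choose Suc i)"
  proof -
    have c2: "real ((2*s) choose Suc i) = (real (2*s) - real i) * real ((2*s) choose i) / real (Suc i)"
      using b by (simp add: field_simps)
    show ?thesis unfolding e_def c2 by (simp add: field_simps)
  qed
  have "Bb s i = fps_const e * (fps_X ^ Suc i * P (int s + 1))"
    unfolding Bb_def e_def invP by (simp add: mult.assoc)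
  then have "L s i (Bb s i) = fps_const ((-1) ^ (Suc i + 1) * real ((2 * s) choose Suc i)) * (fps_X ^ Suc (Suc i) * P (int s + 1))"
    using L_basis[of s i e "Suc i" "int s + 1"] unfolding e1 e2 by simp
  then show ?thesis unfolding Bb_def invP by (simp add: mult.assoc)
qed

definition Cc :: "nat \<Rightarrow> nat \<Rightarrow> real fps" where
  "Cc s i = fps_const ((-1) ^ i * (real (2 * s) - real i) * real ((2 * s) choose i))
        * (\<Sum>t = 0..i. fps_const ((-1) ^ t * real (i choose t) / (real (2 * s) - real t))
              * inv_one_minus_X_pow (int s - int t))"

lemma L_Pt: "L s i (fps_const d * P (int s - int t)) =
    fps_const (d * (1 - (real (2*s) - real t) / real (Suc i))) * P (int s - int t)
  + fps_const (d * (real (2*s) - real t) / real (Suc i)) * P (int s - int (Suc t))"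
proof -
  have a: "real s + of_int (int s - int t) = real (2*s) - real t" by simp
  have b: "int s - int t - 1 = int s - int (Suc t)" by simp
  show ?thesis using L_Pk[of s i d "int s - int t"] unfolding a b .
qed

lemma Cc_alt: "Cc s i = (\<Sum>t = 0..i. fps_const ((-1) ^ i * (real (2 * s) - real i) * real ((2 * s) choose i)
     * ((-1) ^ t * real (i choose t) / (real (2 * s) - real t))) * P (int s - int t))"
  unfolding Cc_def sum_distrib_left
  by (rule sum.cong[OF refl]) (simp only: mult.assoc[symmetric] fps_const_mult)

lemma C0_gen:
  fixes \<sigma> T I K :: real
  assumes "T \<noteq> 0" "1 + I > 0"
  shows "\<sigma> * (T - I) * K * (1 / T) * (1 - T / (1 + I)) = (- \<sigma>) * (T - (1 + I)) * ((T - I) * K / (1 + I)) * (1 / T)"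
proof -
  have "1 + I \<noteq> 0" using assms by simp
  then show ?thesis using assms by (simp add: field_simps)
qed

lemma C_gen:
  fixes \<sigma>i \<sigma>t \<sigma>i' \<sigma>t' T I K p t :: real
  assumes "T - (1 + t) \<noteq> 0" "T - t \<noteq> 0" "1 + t > 0" "1 + I > 0" "\<sigma>i' = - \<sigma>i" "\<sigma>t' = - \<sigma>t"
  shows "\<sigma>i * (T - I) * K * (\<sigma>t' * ((I - t) * p / (1 + t)) / (T - (1 + t))) * (1 - (T - (1 + t)) / (1 + I))
       + \<sigma>i * (T - I) * K * (\<sigma>t * p / (T - t)) * (T - t) / (1 + I)
       = \<sigma>i' * (T - (1 + I)) * ((T - I) * K / (1 + I)) * (\<sigma>t' * (p + (I - t) * p / (1 + t)) / (T - (1 + t)))"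
proof -
  define A where "A = T - (1 + t)"
  define U where "U = 1 + t"
  define R where "R = 1 + I"
  have T: "T = A + U" and tt: "t = U - 1" and II: "I = R - 1" by (simp_all add: A_def U_def R_def)
  have nz: "A \<noteq> 0" "U \<noteq> 0" "R \<noteq> 0" using assms by (simp_all add: A_def U_def R_def)
  have B: "T - t \<noteq> 0" using assms by simp
  have e: "\<sigma>i * (T - I) * K * (\<sigma>t * p / (T - t)) * (T - t) / (1 + I) = \<sigma>i * (T - I) * K * (\<sigma>t * p) / (1 + I)"
    using B by simp
  show ?thesis unfolding e assms(5,6) unfolding T tt II using nz by (simp add: field_simps)
qed

lemma C_real0:
  assumes "Suc i < 2 * s"
  shows "(-1) ^ i * (real (2 * s) - real i) * real ((2 * s) choose i) * ((-1) ^ 0 * real (i choose 0) / (real (2 * s) - real 0))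
       * (1 - (real (2*s) - real 0) / real (Suc i))
     = (-1) ^ Suc i * (real (2 * s) - real (Suc i)) * real ((2 * s) choose Suc i) * ((-1) ^ 0 * real (Suc i choose 0) / (real (2 * s) - real 0))"
proof -
  have b: "real (Suc i) * real ((2*s) choose Suc i) = (real (2*s) - real i) * real ((2*s) choose i)"
    by (rule binom_absorb2)
  have s: "real (2*s) \<noteq> 0" using assms by simp
  have c2: "real ((2*s) choose Suc i) = (real (2*s) - real i) * real ((2*s) choose i) / real (Suc i)"
    using b by (simp add: field_simps)
  have "real (Suc i) = 1 + real i" by simp
  then show ?thesis unfolding c2 using C0_gen[OF s, of "real i" "(-1)^i" "real ((2*s) choose i)"] by simp
qed

lemma C_real:
  assumes "Suc i < 2 * s" "t \<le> i"
  shows "(-1) ^ i * (real (2 * s) - real i) * real ((2 * s) choose i) * ((-1) ^ Suc t * real (i choose Suc t) / (real (2 * s) - real (Suc t)))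
       * (1 - (real (2*s) - real (Suc t)) / real (Suc i))
     + (-1) ^ i * (real (2 * s) - real i) * real ((2 * s) choose i) * ((-1) ^ t * real (i choose t) / (real (2 * s) - real t))
       * (real (2*s) - real t) / real (Suc i)
     = (-1) ^ Suc i * (real (2 * s) - real (Suc i)) * real ((2 * s) choose Suc i) * ((-1) ^ Suc t * real (Suc i choose Suc t) / (real (2 * s) - real (Suc t)))"
proof -
  have b: "real (Suc i) * real ((2*s) choose Suc i) = (real (2*s) - real i) * real ((2*s) choose i)"
    by (rule binom_absorb2)
  have c2: "real ((2*s) choose Suc i) = (real (2*s) - real i) * real ((2*s) choose i) / real (Suc i)"
    using b by (simp add: field_simps)
  have h2: "real (Suc t) * real (i choose Suc t) = (real i - real t) * real (i choose t)"
    by (rule binom_absorb2)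
  have q: "real (i choose Suc t) = (real i - real t) * real (i choose t) / real (Suc t)"
    using h2 by (simp add: field_simps)
  have h3: "real (Suc i choose Suc t) = real (i choose t) + real (i choose Suc t)" by simp
  have n1: "real (2 * s) - real (Suc t) \<noteq> 0" "real (2 * s) - real t \<noteq> 0" using assms by auto
  have r1: "real (Suc i) = 1 + real i" "real (Suc t) = 1 + real t" by simp_all
  have n2: "real (2 * s) - (1 + real t) \<noteq> 0" using n1 by simp
  show ?thesis unfolding c2 h3 q r1
    by (rule C_gen[OF n2 n1(2)]) simp_all
qed

lemma C_step:
  assumes "Suc i < 2 * s"
  shows "L s i (Cc s i) = Cc s (Suc i)"
proof -
  define d where "d i' t = (-1) ^ i' * (real (2 * s) - real i') * real ((2 * s) choose i')
     * ((-1) ^ t * real (i' choose t) / (real (2 * s) - real t))" for i' t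
  define r where "r = real (Suc i)"
  define f where "f t = fps_const (d i t * (1 - (real (2*s) - real t) / r)) * P (int s - int t)" for t
  define g where "g t = fps_const (d i t * (real (2*s) - real t) / r) * P (int s - int (Suc t))" for t
  have "L s i (Cc s i) = (\<Sum>t=0..i. f t + g t)"
    unfolding Cc_alt L_sum f_def g_def d_def r_def by (simp only: L_Pt)
  also have "\<dots> = (\<Sum>t=0..i. f t) + (\<Sum>t=0..i. g t)" by (rule sum.distrib)
  also have "(\<Sum>t=0..i. f t) = (\<Sum>t=0..Suc i. f t)" by (rule sum_ext) (simp add: f_def d_def)
  also have "(\<Sum>t=0..i. g t) = (\<Sum>t=0..Suc i. if t = 0 then 0 else g (t - 1))" by (rule sum_shift)
  also have "(\<Sum>t=0..Suc i. f t) + (\<Sum>t=0..Suc i. if t = 0 then 0 else g (t - 1))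
      = (\<Sum>t=0..Suc i. f t + (if t = 0 then 0 else g (t - 1)))" by (simp add: sum.distrib)
  also have "\<dots> = (\<Sum>t=0..Suc i. fps_const (d (Suc i) t) * P (int s - int t))"
  proof (rule sum.cong[OF refl])
    fix t assume tm: "t \<in> {0..Suc i}"
    show "f t + (if t = 0 then 0 else g (t - 1)) = fps_const (d (Suc i) t) * P (int s - int t)"
    proof (cases t)
      case 0
      have "d i 0 * (1 - (real (2*s) - real 0) / r) = d (Suc i) 0"
        using C_real0[OF assms] unfolding d_def r_def .
      then show ?thesis using 0 by (simp add: f_def)
    next
      case (Suc t')
      have "d i t * (1 - (real (2*s) - real t) / r) + d i t' * (real (2*s) - real t') / r = d (Suc i) t"
        using C_real[OF assms, of t'] tm Suc unfolding d_def r_def by simp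
      then have "f t + g t' = fps_const (d (Suc i) t) * P (int s - int t)"
        unfolding f_def g_def Suc by (rule comb)
      then show ?thesis using Suc by simp
    qed
  qed
  finally show ?thesis unfolding Cc_alt d_def .
qed

lemma R_main:
  assumes "s > 0" "i \<le> 2 * s - 1"
  shows "Hfps s i = Aa s i + Bb s i + Cc s i"
  using assms(2)
proof (induction i)
  case 0
  show ?case using base[OF assms(1)] unfolding Aa_def Bb_def Cc_def by simp
next
  case (Suc i)
  then have h: "Hfps s i = Aa s i + Bb s i + Cc s i" by simp
  have lt: "Suc i < 2 * s" using Suc.prems assms(1) by simp
  have "Hfps s (Suc i) = L s i (Aa s i + Bb s i + Cc s i)" unfolding H_rec h ..
  also have "\<dots> = Aa s (Suc i) + Bb s (Suc i) + Cc s (Suc i)"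
    unfolding L_add A_step B_step C_step[OF lt] ..
  finally show ?case .
qed

theorem proposition1:
  fixes s i :: nat
  assumes "s > 0" and "i \<le> 2 * s - 1"
  shows "Hfps s i =
      (\<Sum>j = 0..i. fps_const ((-1) ^ (j + 1) * real (s choose j)) * fps_X ^ j)
    + fps_const ((-1) ^ (i + 1) * real ((2 * s) choose i)) * fps_X ^ (i + 1)
        * inverse ((1 - fps_X) ^ (s + 1))
    + fps_const ((-1) ^ i * (real (2 * s) - real i) * real ((2 * s) choose i))
        * (\<Sum>t = 0..i. fps_const ((-1) ^ t * real (i choose t) / (real (2 * s) - real t))
              * inv_one_minus_X_pow (int s - int t))"
  using R_main[OF assms] unfolding Aa_def Bb_def Cc_def .

end
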